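(* Let $\mathbb{X}$ be a discrete group with identity $\circ$ and let $\mu$ be a finitely supported probability measure on $\mathbb{X}$ satisfying (A1) $\mu(xzx^{-1})=\mu(z)$ for all $x,z\in\mathbb{X}$ and (A2) $\mu(z)=\mu(z^{-1})$ for all $z\in\mathbb{X}$. Let $L$ be the operator on the algebra $\mathcal{A}$ of bounded functions $\mathbb{X}\to\mathbb{R}$ given by $(Lf)(x)=\sum_{z\in\mathbb{X}}\mu(z)(f(xz)-f(x))$. Then $L$ has non-negative Bakry–Émery curvature, i.e. $\Gamma_2(f)(x)\ge 0$ for all $f\in\mathcal{A}$ and all $x\in\mathbb{X}$.
   Context: The carré du champ operator is $\Gamma(f,g):=\frac12\left[L(fg)-fLg-gLf\right]$ and the iterated carré du champ operator is $\Gamma_2(f,g):=\frac12\left[L\Gamma(f,g)-\Gamma(f,Lg)-\Gamma(g,Lf)\right]$; write $\Gamma(f)=\Gamma(f,f)$, $\Gamma_2(f)=\Gamma_2(f,f)$. The Bakry–Émery curvature of $L$ is the largest $\kappa\in[-\infty,\infty)$ such that $\Gamma_2(f)\ge\kappa\,\Gamma(f)$ pointwise for all $f\in\mathcal{A}$. *)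

theory Defs
  imports "HOL-Analysis.Analysis"
begin

text \<open>The group is written additively via the (not necessarily commutative) type class
  group_add: the product xz is x + z, the inverse z^{-1} is - z, the identity is 0.
  A finitely supported probability measure is a function mu with mu z \<ge> 0,
  finite support and total mass 1.\<close>

definition supp_mu :: "('a \<Rightarrow> real) \<Rightarrow> 'a set" where
  "supp_mu mu = {z. mu z \<noteq> 0}"

definition fin_prob :: "('a \<Rightarrow> real) \<Rightarrow> bool" where
  "fin_prob mu \<longleftrightarrow> (\<forall>z. 0 \<le> mu z) \<and> finite (supp_mu mu) \<and> (\<Sum>z\<in>supp_mu mu. mu z) = 1"

definition Lop :: "('a::group_add \<Rightarrow> real) \<Rightarrow> ('a \<Rightarrow> real) \<Rightarrow> 'a \<Rightarrow> real" where
  "Lop mu f x = (\<Sum>z\<in>supp_mu mu. mu z * (f (x + z) - f x))"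

definition Gamma :: "('a::group_add \<Rightarrow> real) \<Rightarrow> ('a \<Rightarrow> real) \<Rightarrow> ('a \<Rightarrow> real) \<Rightarrow> 'a \<Rightarrow> real" where
  "Gamma mu f g x = (Lop mu (\<lambda>y. f y * g y) x - f x * Lop mu g x - g x * Lop mu f x) / 2"

definition Gamma2 :: "('a::group_add \<Rightarrow> real) \<Rightarrow> ('a \<Rightarrow> real) \<Rightarrow> ('a \<Rightarrow> real) \<Rightarrow> 'a \<Rightarrow> real" where
  "Gamma2 mu f g x = (Lop mu (Gamma mu f g) x - Gamma mu f (Lop mu g) x - Gamma mu g (Lop mu f) x) / 2"

end

theory Submission
  imports Defs
begin

lemma Gamma_eq: "Gamma mu g h y = (\<Sum>z\<in>supp_mu mu. mu z * ((g (y+z) - g y) * (h (y+z) - h y))) / 2"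
  unfolding Gamma_def Lop_def
  by (simp add: sum_subtractf[symmetric] sum_distrib_left algebra_simps)

lemma L_shift:
  fixes mu :: "'a::group_add \<Rightarrow> real"
  assumes A1: "\<forall>y z. mu (y + z + - y) = mu z"
  shows "Lop mu f (y + z) - Lop mu f y
     = (\<Sum>w\<in>supp_mu mu. mu w * (f (y+w+z) - f (y+w) - f (y+z) + f y))"
proof -
  have "Lop mu f (y + z) = (\<Sum>w\<in>supp_mu mu. mu w * (f (y+w+z) - f (y+z)))"
    unfolding Lop_def
    apply (rule sum.reindex_bij_witness[where i="\<lambda>w. - z + w + z" and j="\<lambda>w. z + w + - z"])
    using A1[rule_format, of "-z"] A1[rule_format, of z]
    by (auto simp: add.assoc supp_mu_def)
then show ?thesis unfolding Lop_def
    by (simp add: sum_subtractf[symmetric] algebra_simps)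
qed

theorem theorem2:
  fixes mu :: "'a::group_add \<Rightarrow> real" and f :: "'a \<Rightarrow> real" and x :: 'a
  assumes "fin_prob mu"
    and A1: "\<forall>y z. mu (y + z + - y) = mu z"
    and A2: "\<forall>z. mu z = mu (- z)"
    and "bounded (range f)"
  shows "Gamma2 mu f f x \<ge> 0"
proof -
  let ?S = "supp_mu mu"
  have pos: "\<And>z. mu z \<ge> 0" using assms(1) by (simp add: fin_prob_def)
  have 1: "Lop mu (Gamma mu f f) x = (\<Sum>w\<in>?S. \<Sum>z\<in>?S. mu w * mu z *
      ((f (x+w+z) - f (x+w))^2 - (f (x+z) - f x)^2)) / 2"
    unfolding Lop_def Gamma_eq sum_divide_distrib
    apply (rule sum.cong[OF refl])
    apply (simp only: diff_divide_distrib[symmetric] sum_subtractf[symmetric] sum_divide_distrib[symmetric] sum_distrib_left)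
    apply (simp only: times_divide_eq_right)
    apply (rule arg_cong[where f="\<lambda>t. t / 2"])
    apply (simp only: sum_distrib_left)
    apply (rule sum.cong[OF refl])
    by (simp add: power2_eq_square algebra_simps)
  have 2: "Gamma mu f (Lop mu f) x = (\<Sum>z\<in>?S. \<Sum>w\<in>?S. mu z * mu w *
      ((f (x+z) - f x) * (f (x+w+z) - f (x+w) - f (x+z) + f x))) / 2"
    unfolding Gamma_eq L_shift[OF A1]
    by (simp add: sum_distrib_left algebra_simps)
  have h1s: "Lop mu (Gamma mu f f) x = (\<Sum>z\<in>?S. \<Sum>w\<in>?S. mu w * mu z *
      ((f (x+w+z) - f (x+w))^2 - (f (x+z) - f x)^2)) / 2"
    unfolding 1 by (rule arg_cong[where f="\<lambda>t. t/2"], rule sum.swap)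
  have "Gamma2 mu f f x = (\<Sum>z\<in>?S. \<Sum>w\<in>?S. mu z * mu w *
      (f (x+w+z) - f (x+w) - f (x+z) + f x)^2) / 4"
    unfolding Gamma2_def h1s 2
    apply (simp only: sum_divide_distrib sum_subtractf[symmetric])
    apply (simp only: sum_divide_distrib[symmetric] sum_subtractf[symmetric] diff_divide_distrib[symmetric])
    apply (simp only: sum_divide_distrib)
    apply (rule sum.cong[OF refl])+
    by (simp add: power2_eq_square algebra_simps)
  also have "\<dots> \<ge> 0" by (intro divide_nonneg_pos sum_nonneg mult_nonneg_nonneg pos) auto
  finally show ?thesis .
qed

end
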